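(* Let $W$ be a finite real reflection group acting effectively on $\mathbf{R}^n$, with root system consisting of unit vectors, and let $\mathcal{A}$ be its (central, essential) arrangement of reflecting hyperplanes with intersection lattice $L_{\mathcal{A}}$. Let $\tau_1,\dots,\tau_n$ be any linearly independent roots. Let $$\lambda=\min\{|\mathbf{r}\cdot\rho| : \mathbf{r}\text{ a unit ray},\ \rho\text{ a root},\ \mathbf{r}\cdot\rho\neq 0\},$$ $a=1+1/\lambda$, and $\mathbf{v}=\tau_1+a\tau_2+a^2\tau_3+\dots+a^{n-1}\tau_n$. Then $|\mathbf{r}\cdot\mathbf{v}|\ge\lambda$ for every unit length ray $\mathbf{r}$. In particular, the affine hyperplane $H_{\mathbf{v}}$ is generic with respect to $\mathcal{A}$.
   Context: The roots of $W$ are the unit vectors $\pm\rho$ normal to reflecting hyperplanes of $W$ (in particular they are images under $W$ of the inward unit normals of a fundamental chamber). $L_{\mathcal{A}}$ is the set of intersections of subfamilies of $\mathcal{A}$, ordered by reverse inclusion. A ray is a nonzero vector lying in a one-dimensional subspace belonging to $L_{\mathcal{A}}$; a unit ray is a ray of length $1$ (there are finitely many, so $\lambda$ is a well-defined positive real number). For a nonzero vector $\mathbf{v}$, $H_{\mathbf{v}}$ is the affine hyperplane through $\mathbf{v}$ and normal to $\mathbf{v}$, i.e. $\{\mathbf{x}:\mathbf{x}\cdot\mathbf{v}=\mathbf{v}\cdot\mathbf{v}\}$. $H_{\mathbf{v}}$ is generic with respect to $\mathcal{A}$ if $\dim(H_{\mathbf{v}}\cap X)=\dim(X)-1$ for all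 $X\in L_{\mathcal{A}}$. *)

theory Defs
  imports "HOL-Analysis.Analysis"
begin

definition refl :: "'a::euclidean_space \<Rightarrow> 'a \<Rightarrow> 'a" where
  "refl \<rho> x = x - (2 * (x \<bullet> \<rho>)) *\<^sub>R \<rho>"

inductive_set gen_monoid :: "('a \<Rightarrow> 'a) set \<Rightarrow> ('a \<Rightarrow> 'a) set" for S where
  gen_id: "id \<in> gen_monoid S"
| gen_step: "s \<in> S \<Longrightarrow> g \<in> gen_monoid S \<Longrightarrow> s \<circ> g \<in> gen_monoid S"

definition roots :: "('a::euclidean_space \<Rightarrow> 'a) set \<Rightarrow> 'a set" where
  "roots W = {\<rho>. norm \<rho> = 1 \<and> refl \<rho> \<in> W}"

text \<open>A finite real reflection group: a finite set of linear maps generated (as a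
  monoid, hence as a group since it is finite) by the reflections it contains.\<close>
definition finite_reflection_group :: "('a::euclidean_space \<Rightarrow> 'a) set \<Rightarrow> bool" where
  "finite_reflection_group W \<longleftrightarrow> finite W \<and> W = gen_monoid (refl ` roots W)"

text \<open>Essential: roots span the whole space (no nonzero common fixed vector).\<close>
definition essential :: "('a::euclidean_space \<Rightarrow> 'a) set \<Rightarrow> bool" where
  "essential W \<longleftrightarrow> span (roots W) = UNIV"

definition arrangement :: "('a::euclidean_space \<Rightarrow> 'a) set \<Rightarrow> 'a set set" where
  "arrangement W = {{x. x \<bullet> \<rho> = 0} | \<rho>. \<rho> \<in> roots W}"

definition int_lattice :: "('a::euclidean_space \<Rightarrow> 'a) set \<Rightarrow> 'a set set" where
  "int_lattice W = {\<Inter> B | B. B \<subseteq> arrangement W}"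

definition ray :: "('a::euclidean_space \<Rightarrow> 'a) set \<Rightarrow> 'a \<Rightarrow> bool" where
  "ray W r \<longleftrightarrow> r \<noteq> 0 \<and> (\<exists>X \<in> int_lattice W. dim X = 1 \<and> r \<in> X)"

definition unit_ray :: "('a::euclidean_space \<Rightarrow> 'a) set \<Rightarrow> 'a \<Rightarrow> bool" where
  "unit_ray W r \<longleftrightarrow> ray W r \<and> norm r = 1"

definition lambda_const :: "('a::euclidean_space \<Rightarrow> 'a) set \<Rightarrow> real" where
  "lambda_const W = Min {\<bar>r \<bullet> \<rho>\<bar> | r \<rho>. unit_ray W r \<and> \<rho> \<in> roots W \<and> r \<bullet> \<rho> \<noteq> 0}"

definition H :: "'a::euclidean_space \<Rightarrow> 'a set" where
  "H v = {x. x \<bullet> v = v \<bullet> v}"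

text \<open>Genericity; dimensions of affine sets via aff_dim (empty set has dimension -1).\<close>
definition generic :: "('a::euclidean_space \<Rightarrow> 'a) set \<Rightarrow> 'a \<Rightarrow> bool" where
  "generic W v \<longleftrightarrow> (\<forall>X \<in> int_lattice W. aff_dim (H v \<inter> X) = aff_dim X - 1)"

end

theory Submission
  imports Defs
begin

lemma refl_eq_unit:
  fixes \<rho> \<sigma> :: "'a::euclidean_space"
  assumes "norm \<rho> = 1" "norm \<sigma> = 1" "refl \<rho> = refl \<sigma>"
  shows "\<sigma> = \<rho> \<or> \<sigma> = - \<rho>"
proof -
  have rr: "\<rho> \<bullet> \<rho> = 1" using assms(1) by (simp add: dot_square_norm)
  have "refl \<rho> \<rho> = refl \<sigma> \<rho>" using assms(3) by simp
  hence "(2::real) *\<^sub>R \<rho> = (2 * (\<rho> \<bullet> \<sigma>)) *\<^sub>R \<sigma>" using rr by (simp add: refl_def algebra_simps scaleR_2)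
  hence "(2::real) *\<^sub>R \<rho> = 2 *\<^sub>R ((\<rho> \<bullet> \<sigma>) *\<^sub>R \<sigma>)" by simp
  hence e: "\<rho> = (\<rho> \<bullet> \<sigma>) *\<^sub>R \<sigma>" by (simp only: scaleR_cancel_left) simp
  hence "norm \<rho> = \<bar>\<rho> \<bullet> \<sigma>\<bar>" using assms(2) by (metis norm_scaleR mult.right_neutral real_norm_def)
  hence "\<rho> \<bullet> \<sigma> = 1 \<or> \<rho> \<bullet> \<sigma> = -1" using assms(1) by linarith
  thus ?thesis using e by auto
qed

lemma finite_roots:
  assumes "finite W"
  shows "finite (roots W)"
proof -
  have "roots W \<subseteq> (\<Union>g\<in>W. {\<rho>. norm \<rho> = 1 \<and> refl \<rho> = g})" by (auto simp: roots_def)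
  moreover have "finite {\<rho>. norm \<rho> = 1 \<and> refl \<rho> = g}" for g :: "'a \<Rightarrow> 'a"
  proof (cases "\<exists>\<rho>. norm \<rho> = 1 \<and> refl \<rho> = g")
    case True
    then obtain \<rho> where r: "norm \<rho> = 1" "refl \<rho> = g" by blast
    have "{\<rho>. norm \<rho> = 1 \<and> refl \<rho> = g} \<subseteq> {\<rho>, -\<rho>}"
    proof
      fix x assume "x \<in> {\<rho>. norm \<rho> = 1 \<and> refl \<rho> = g}"
      thus "x \<in> {\<rho>, -\<rho>}" using refl_eq_unit[OF r(1), of x] r(2) by auto
    qed
    thus ?thesis using finite_subset by blast
  next
    case False
    hence "{\<rho>. norm \<rho> = 1 \<and> refl \<rho> = g} = {}" by blast
    thus ?thesis by (simp only: finite.emptyI)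
  qed
  ultimately show ?thesis using assms by (meson finite_UN_I finite_subset)
qed

lemma finite_int_lattice:
  assumes "finite W"
  shows "finite (int_lattice W)"
proof -
  have "finite (arrangement W)" unfolding arrangement_def
    using finite_roots[OF assms] by (simp add: setcompr_eq_image)
  moreover have "int_lattice W = Inter ` Pow (arrangement W)" unfolding int_lattice_def by auto
  ultimately show ?thesis by simp
qed

lemma subspace_int_lattice:
  assumes "X \<in> int_lattice W"
  shows "subspace X"
proof -
  obtain B where B: "B \<subseteq> arrangement W" "X = \<Inter>B" using assms unfolding int_lattice_def by auto
  have "\<forall>s\<in>B. subspace s" using B(1) unfolding arrangement_def
    by (auto simp: subspace_def inner_add_left)
  thus ?thesis using B(2) subspace_Inter by blast
qed

lemma finite_unit_vectors_dim1:
  fixes X :: "'a::euclidean_space set"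
  assumes "subspace X" "dim X = 1"
  shows "finite {r\<in>X. norm r = 1}"
proof -
  obtain B where B: "B \<subseteq> X" "independent B" "X \<subseteq> span B" "card B = dim X" using basis_exists by blast
  then obtain b where b: "B = {b}" using assms(2) by (auto simp: card_Suc_eq)
  have "{r\<in>X. norm r = 1} \<subseteq> {(1/norm b) *\<^sub>R b, -(1/norm b) *\<^sub>R b}"
  proof
    fix r assume r: "r \<in> {r\<in>X. norm r = 1}"
    then obtain t where t: "r = t *\<^sub>R b" using B(3) b by (auto simp: span_singleton)
    hence "\<bar>t\<bar> * norm b = 1" using r by simp
    moreover have "norm b \<noteq> 0" using B(2) b by (auto simp: dependent_zero)
    ultimately have "\<bar>t\<bar> = 1 / norm b" by (simp add: field_simps)
    hence "t = 1 / norm b \<or> t = - (1/norm b)" by (simp add: abs_if split: if_splits)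
    thus "r \<in> {(1/norm b) *\<^sub>R b, -(1/norm b) *\<^sub>R b}" using t by auto
  qed
  thus ?thesis using finite_subset by blast
qed

lemma finite_unit_rays:
  assumes "finite W"
  shows "finite {r. unit_ray W r}"
proof -
  have "{r. unit_ray W r} \<subseteq> (\<Union>X\<in>{X\<in>int_lattice W. dim X = 1}. {r\<in>X. norm r = 1})"
    by (auto simp: unit_ray_def ray_def)
  moreover have "finite (\<Union>X\<in>{X\<in>int_lattice W. dim X = 1}. {r\<in>X. norm r = 1})"
    using finite_int_lattice[OF assms] finite_unit_vectors_dim1 subspace_int_lattice by auto
  ultimately show ?thesis using finite_subset by blast
qed

lemma lattice_has_line:
  assumes sp: "span (roots W) = UNIV"
  shows "X \<in> int_lattice W \<Longrightarrow> dim X = Suc k \<Longrightarrow> \<exists>Y\<in>int_lattice W. Y \<subseteq> X \<and> dim Y = 1"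
proof (induction k arbitrary: X)
  case 0
  then show ?case by auto
next
  case (Suc k)
  have subX: "subspace X" using subspace_int_lattice[OF Suc.prems(1)] .
  have "\<exists>\<rho>\<in>roots W. \<not> X \<subseteq> {x. x \<bullet> \<rho> = 0}"
  proof (rule ccontr)
    assume "\<not> ?thesis"
    hence all: "\<forall>\<rho>\<in>roots W. \<forall>x\<in>X. x \<bullet> \<rho> = 0" by blast
    have "X \<subseteq> {0}"
    proof
      fix x assume x: "x \<in> X"
      have "subspace {y. x \<bullet> y = 0}" by (auto simp: subspace_def inner_add_right)
      moreover have "roots W \<subseteq> {y. x \<bullet> y = 0}" using all x by auto
      ultimately have "span (roots W) \<subseteq> {y. x \<bullet> y = 0}" by (rule span_minimal[rotated])
      hence "x \<in> {y. x \<bullet> y = 0}" using sp by blast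
      hence "x \<bullet> x = 0" by simp
      thus "x \<in> {0}" by simp
    qed
    hence "dim X = 0" by simp
    thus False using Suc.prems(2) by simp
  qed
  then obtain \<rho> where \<rho>: "\<rho> \<in> roots W" "\<not> X \<subseteq> {x. x \<bullet> \<rho> = 0}" by blast
  obtain B where B: "B \<subseteq> arrangement W" "X = \<Inter>B" using Suc.prems(1) unfolding int_lattice_def by auto
  define Y where "Y = X \<inter> {x. x \<bullet> \<rho> = 0}"
  have "Y = \<Inter>(insert {x. x \<bullet> \<rho> = 0} B)" using B(2) Y_def by auto
  moreover have "insert {x. x \<bullet> \<rho> = 0} B \<subseteq> arrangement W" using B(1) \<rho>(1) unfolding arrangement_def by auto
  ultimately have YL: "Y \<in> int_lattice W" unfolding int_lattice_def by blast
  have eqY: "Y = X \<inter> {x. \<rho> \<bullet> x = 0}" unfolding Y_def by (auto simp: inner_commute)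
  have "aff_dim Y = aff_dim X - 1"
    unfolding eqY aff_dim_affine_Int_hyperplane[OF subspace_imp_affine[OF subX]]
    using \<rho>(2) subspace_0[OF subX] by (auto simp: inner_commute)
  hence "dim Y = Suc k" using aff_dim_subspace[OF subX] aff_dim_subspace[OF subspace_int_lattice[OF YL]]
      Suc.prems(2) by simp
  then obtain Z where "Z \<in> int_lattice W" "Z \<subseteq> Y" "dim Z = 1" using Suc.IH[OF YL] by blast
  thus ?case unfolding Y_def by blast
qed

lemma lattice_has_unit_ray:
  assumes sp: "span (roots W) = UNIV" and X: "X \<in> int_lattice W" and nz: "\<not> X \<subseteq> {0}"
  shows "\<exists>r\<in>X. unit_ray W r"
proof -
  have "dim X \<noteq> 0" using nz by simp
  then obtain k where "dim X = Suc k" using not0_implies_Suc by blast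
  then obtain Y where Y: "Y \<in> int_lattice W" "Y \<subseteq> X" "dim Y = 1" using lattice_has_line[OF sp X] by blast
  have subY: "subspace Y" using subspace_int_lattice[OF Y(1)] .
  have "\<not> Y \<subseteq> {0}" using Y(3) by (metis dim_eq_0 zero_neq_one)
  then obtain y where y: "y \<in> Y" "y \<noteq> 0" by blast
  define r where "r = (1 / norm y) *\<^sub>R y"
  have "r \<in> Y" unfolding r_def using subspace_scale[OF subY y(1)] .
  moreover have "norm r = 1" unfolding r_def using y(2) by simp
  moreover hence "r \<noteq> 0" by auto
  ultimately have "unit_ray W r" unfolding unit_ray_def ray_def using Y by blast
  thus ?thesis using \<open>r \<in> Y\<close> Y(2) by blast
qed

lemma geom_sum_aux:
  fixes l a :: real
  assumes "l * a = l + 1"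
  shows "(\<Sum>i<k. a ^ i) = l * (a ^ k - 1)"
proof (induction k)
  case 0 then show ?case by simp
next
  case (Suc k)
  have "(\<Sum>i<Suc k. a ^ i) = l * (a ^ k - 1) + a ^ k" using Suc.IH by simp
  also have "\<dots> = (l + 1) * a ^ k - l" by (simp add: algebra_simps)
  also have "\<dots> = (l * a) * a ^ k - l" by (simp only: assms)
  also have "\<dots> = l * (a ^ Suc k - 1)" by (simp add: algebra_simps)
  finally show ?case .
qed

lemma geom_sum:
  fixes l :: real
  assumes "l > 0"
  shows "(\<Sum>i<k. (1 + 1/l) ^ i) = l * ((1 + 1/l) ^ k - 1)"
  by (rule geom_sum_aux) (use assms in \<open>simp add: field_simps\<close>)

theorem proposition4p1:
  fixes W :: "('a::euclidean_space \<Rightarrow> 'a) set" and \<tau> :: "nat \<Rightarrow> 'a"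
  assumes "finite_reflection_group W"
    and "essential W"
    and "\<forall>i < DIM('a). \<tau> i \<in> roots W"
    and "inj_on \<tau> {..<DIM('a)}"
    and "independent (\<tau> ` {..<DIM('a)})"
  defines "a \<equiv> 1 + 1 / lambda_const W"
  defines "v \<equiv> (\<Sum>i<DIM('a). a ^ i *\<^sub>R \<tau> i)"
  shows "(\<forall>r. unit_ray W r \<longrightarrow> \<bar>r \<bullet> v\<bar> \<ge> lambda_const W) \<and> generic W v"
proof -
  define n where "n = DIM('a)"
  define l where "l = lambda_const W"
  define S where "S = {\<bar>r \<bullet> \<rho>\<bar> | r \<rho>. unit_ray W r \<and> \<rho> \<in> roots W \<and> r \<bullet> \<rho> \<noteq> 0}"
  have finW: "finite W" using assms(1) unfolding finite_reflection_group_def by blast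
  have sp: "span (roots W) = UNIV" using assms(2) unfolding essential_def .
  have "S \<subseteq> (\<lambda>(r,\<rho>). \<bar>r \<bullet> \<rho>\<bar>) ` ({r. unit_ray W r} \<times> roots W)" unfolding S_def by auto
  hence finS: "finite S" using finite_unit_rays[OF finW] finite_roots[OF finW]
    by (meson finite_SigmaI finite_imageI finite_subset)
  have lS: "l = Min S" unfolding l_def S_def lambda_const_def ..
  have lam_le: "l \<le> \<bar>r \<bullet> \<rho>\<bar>" if "unit_ray W r" "\<rho> \<in> roots W" "r \<bullet> \<rho> \<noteq> 0" for r \<rho>
  proof -
    have "\<bar>r \<bullet> \<rho>\<bar> \<in> S" unfolding S_def using that by blast
    thus ?thesis unfolding lS using finS by simp
  qed
  have Spos: "0 < l" if "S \<noteq> {}"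
  proof -
    have "\<forall>x\<in>S. 0 < x" unfolding S_def by auto
    thus ?thesis unfolding lS using finS that by simp
  qed
  have unit_tau: "norm (\<tau> i) = 1" if "i < n" for i
    using assms(3) that unfolding n_def roots_def by auto
  have span_tau: "span (\<tau> ` {..<n}) = UNIV"
  proof -
    have "card (\<tau> ` {..<n}) = n" using assms(4) unfolding n_def by (simp add: card_image)
    hence "UNIV \<subseteq> span (\<tau> ` {..<n})"
      using card_ge_dim_independent[of "\<tau> ` {..<n}" UNIV] assms(5) unfolding n_def by simp
    thus ?thesis by blast
  qed
  have key: "0 < l \<and> l \<le> \<bar>r \<bullet> v\<bar>" if ur: "unit_ray W r" for r
  proof -
    have nr: "norm r = 1" using ur unfolding unit_ray_def by blast
    define I where "I = {i. i < n \<and> r \<bullet> \<tau> i \<noteq> 0}"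
    have finI: "finite I" unfolding I_def by simp
    have "I \<noteq> {}"
    proof
      assume "I = {}"
      hence "\<tau> ` {..<n} \<subseteq> {y. r \<bullet> y = 0}" unfolding I_def by auto
      moreover have "subspace {y. r \<bullet> y = 0}" by (auto simp: subspace_def inner_add_right)
      ultimately have "span (\<tau> ` {..<n}) \<subseteq> {y. r \<bullet> y = 0}" by (rule span_minimal)
      hence "r \<in> {y. r \<bullet> y = 0}" using span_tau by blast
      hence "r \<bullet> r = 0" by simp
      thus False using nr by simp
    qed
    define k where "k = Max I"
    have kI: "k \<in> I" unfolding k_def using finI \<open>I \<noteq> {}\<close> by simp
    have kmax: "i \<in> I \<Longrightarrow> i \<le> k" for i unfolding k_def using finI by simp
    have kn: "k < n" and rk: "r \<bullet> \<tau> k \<noteq> 0" using kI unfolding I_def by auto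
    have lk: "l \<le> \<bar>r \<bullet> \<tau> k\<bar>" using lam_le[OF ur _ rk] assms(3) kn unfolding n_def by blast
    have "S \<noteq> {}" unfolding S_def using ur assms(3) kn rk unfolding n_def by blast
    hence lpos: "0 < l" by (rule Spos)
    have a_def': "a = 1 + 1 / l" unfolding a_def l_def ..
    have apos: "0 < a" using lpos a_def' by (simp add: add_pos_pos)
    have "r \<bullet> v = (\<Sum>i<n. a ^ i * (r \<bullet> \<tau> i))"
      unfolding v_def n_def by (simp add: inner_sum_right)
    also have "\<dots> = (\<Sum>i<Suc k. a ^ i * (r \<bullet> \<tau> i))"
    proof (rule sum.mono_neutral_right)
      show "finite {..<n}" by simp
      show "{..<Suc k} \<subseteq> {..<n}" using kn by auto
      show "\<forall>i\<in>{..<n} - {..<Suc k}. a ^ i * (r \<bullet> \<tau> i) = 0"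
      proof
        fix i assume i: "i \<in> {..<n} - {..<Suc k}"
        hence "i \<notin> I" using kmax by fastforce
        thus "a ^ i * (r \<bullet> \<tau> i) = 0" using i unfolding I_def by auto
      qed
    qed
    also have "\<dots> = a ^ k * (r \<bullet> \<tau> k) + (\<Sum>i<k. a ^ i * (r \<bullet> \<tau> i))" by simp
    finally have rv: "r \<bullet> v = a ^ k * (r \<bullet> \<tau> k) + (\<Sum>i<k. a ^ i * (r \<bullet> \<tau> i))" .
    have "\<bar>\<Sum>i<k. a ^ i * (r \<bullet> \<tau> i)\<bar> \<le> (\<Sum>i<k. \<bar>a ^ i * (r \<bullet> \<tau> i)\<bar>)"
      by (rule sum_abs)
    also have "\<dots> \<le> (\<Sum>i<k. a ^ i)"
    proof (rule sum_mono)
      fix i assume "i \<in> {..<k}"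
      hence "i < n" using kn by simp
      hence "\<bar>r \<bullet> \<tau> i\<bar> \<le> norm r * norm (\<tau> i)" by (rule_tac Cauchy_Schwarz_ineq2)
      hence c: "\<bar>r \<bullet> \<tau> i\<bar> \<le> 1" using nr unit_tau[OF \<open>i < n\<close>] by simp
      have "\<bar>a ^ i * (r \<bullet> \<tau> i)\<bar> = a ^ i * \<bar>r \<bullet> \<tau> i\<bar>" using apos by (simp add: abs_mult)
      also have "\<dots> \<le> a ^ i * 1" using c apos by (intro mult_left_mono) auto
      finally show "\<bar>a ^ i * (r \<bullet> \<tau> i)\<bar> \<le> a ^ i" by simp
    qed
    also have "\<dots> = l * (a ^ k - 1)" unfolding a_def' by (rule geom_sum[OF lpos])
    finally have tail: "\<bar>\<Sum>i<k. a ^ i * (r \<bullet> \<tau> i)\<bar> \<le> l * (a ^ k - 1)" .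
    have head: "a ^ k * l \<le> \<bar>a ^ k * (r \<bullet> \<tau> k)\<bar>"
      using lk apos by (simp add: abs_mult mult_left_mono)
    have "l = a ^ k * l - l * (a ^ k - 1)" by (simp add: algebra_simps)
    also have "\<dots> \<le> \<bar>r \<bullet> v\<bar>" unfolding rv using head tail by linarith
    finally show ?thesis using lpos by simp
  qed
  have part1: "\<forall>r. unit_ray W r \<longrightarrow> \<bar>r \<bullet> v\<bar> \<ge> lambda_const W"
    using key unfolding l_def by blast
  have UL: "UNIV \<in> int_lattice W" unfolding int_lattice_def by auto
  have "\<not> (UNIV :: 'a set) \<subseteq> {0}"
  proof
    assume "(UNIV :: 'a set) \<subseteq> {0}"
    hence "\<tau> 0 = 0" by auto
    thus False using unit_tau[of 0] unfolding n_def by simp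
  qed
  then obtain r0 where "unit_ray W r0" using lattice_has_unit_ray[OF sp UL] by blast
  hence "0 < \<bar>r0 \<bullet> v\<bar>" using key by force
  hence vnz: "v \<noteq> 0" by auto
  hence vv: "v \<bullet> v \<noteq> 0" by simp
  have "generic W v" unfolding generic_def
  proof
    fix X assume XL: "X \<in> int_lattice W"
    have subX: "subspace X" using subspace_int_lattice[OF XL] .
    have eq: "H v \<inter> X = X \<inter> {x. v \<bullet> x = v \<bullet> v}" unfolding H_def by (auto simp: inner_commute)
    have notsub: "\<not> X \<subseteq> {x. v \<bullet> x = v \<bullet> v}" using subspace_0[OF subX] vv by auto
    show "aff_dim (H v \<inter> X) = aff_dim X - 1"
    proof (cases "X \<subseteq> {0}")
      case True
      hence X0: "X = {0}" using subspace_0[OF subX] by auto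
      have "H v \<inter> X = {}" using X0 vv unfolding H_def by auto
      thus ?thesis using X0 by simp
    next
      case False
      then obtain r where r: "r \<in> X" "unit_ray W r" using lattice_has_unit_ray[OF sp XL] by blast
      have rv: "r \<bullet> v \<noteq> 0" using key[OF r(2)] by auto
      define x where "x = ((v \<bullet> v) / (r \<bullet> v)) *\<^sub>R r"
      have "x \<in> X" unfolding x_def using subspace_scale[OF subX r(1)] .
      moreover have "v \<bullet> x = v \<bullet> v" unfolding x_def using rv by (simp add: inner_commute)
      ultimately have ne: "X \<inter> {x. v \<bullet> x = v \<bullet> v} \<noteq> {}" by blast
      show ?thesis unfolding eq aff_dim_affine_Int_hyperplane[OF subspace_imp_affine[OF subX]]
        using ne notsub by simp
    qed
  qed
  thus ?thesis using part1 by blast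
qed

end
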